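(* For every integer $n\ge1$, $$J\mathcal{G}_{n+1}^{(3)}J\mathcal{G}_{n-1}^{(3)}-\left[J\mathcal{G}_{n}^{(3)}\right]^{2}=\frac{1}{49}\left[2^{n}\left(2\Theta Y_{n-1}(1)-Y_{n}(1)\Theta\right)-\left(\Xi+14\Omega\right)\right]$$ and $$K\mathcal{G}_{n+1}^{(3)}K\mathcal{G}_{n-1}^{(3)}-\left[K\mathcal{G}_{n}^{(3)}\right]^{2}=2^{n-1}\left[2\Theta Y^{*}_{n-1}(1)-Y^{*}_{n}(1)\Theta\right]-\left[\Xi^{*}+6\Omega\right],$$ where $Y_{m}(1)=X_{m}(2\mathbf{A}-\mathbf{B})-X_{m+1}(3\mathbf{B}+\mathbf{A})$, $Y^{*}_{m}(1)=X_{m}(2\mathbf{C}-\mathbf{D})-X_{m+1}(3\mathbf{D}+\mathbf{C})$, $\Xi=\mathbf{A}^2+\mathbf{A}\mathbf{B}+\mathbf{B}^2$ and $\Xi^{*}=\mathbf{C}^2+\mathbf{C}\mathbf{D}+\mathbf{D}^2$.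
   Context: Fix real numbers $\lambda_1,\lambda_2,\lambda_3$. The algebra $\mathbb{H}_{\lambda_1,\lambda_2,\lambda_3}$ of 3-parameter generalized quaternions is the real associative algebra of elements $\psi_0+\psi_1\mathbf{e}_1+\psi_2\mathbf{e}_2+\psi_3\mathbf{e}_3$ ($\psi_i\in\mathbb{R}$) with $\mathbf{e}_1^2=-\lambda_1\lambda_2$, $\mathbf{e}_2^2=-\lambda_1\lambda_3$, $\mathbf{e}_3^2=-\lambda_2\lambda_3$, $\mathbf{e}_1\mathbf{e}_2=-\mathbf{e}_2\mathbf{e}_1=\lambda_1\mathbf{e}_3$, $\mathbf{e}_1\mathbf{e}_3=-\mathbf{e}_3\mathbf{e}_1=-\lambda_2\mathbf{e}_2$, $\mathbf{e}_2\mathbf{e}_3=-\mathbf{e}_3\mathbf{e}_2=\lambda_3\mathbf{e}_1$. The third-order Jacobsthal numbers are $J_0^{(3)}=0$, $J_1^{(3)}=J_2^{(3)}=1$, $J_n^{(3)}=J_{n-1}^{(3)}+J_{n-2}^{(3)}+2J_{n-3}^{(3)}$ for $n\ge3$; the modified third-order Jacobsthal numbers are $K_0^{(3)}=3$, $K_1^{(3)}=1$, $K_2^{(3)}=3$, $K_n^{(3)}=K_{n-1}^{(3)}+K_{n-2}^{(3)}+2K_{n-3}^{(3)}$ for $n\ge3$. For $n\ge0$ define $J\mathcal{G}_n^{(3)}=J_n^{(3)}+J_{n+1}^{(3)}\mathbf{e}_1+J_{n+2}^{(3)}\mathbf{e}_2+J_{n+3}^{(3)}\mathbf{e}_3$ and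 $K\mathcal{G}_n^{(3)}=K_n^{(3)}+K_{n+1}^{(3)}\mathbf{e}_1+K_{n+2}^{(3)}\mathbf{e}_2+K_{n+3}^{(3)}\mathbf{e}_3$. Here $X_n=0,1,-1$ according as $n\equiv0,1,2\pmod 3$, $\Theta=1+2\mathbf{e}_1+4\mathbf{e}_2+8\mathbf{e}_3$, $\mathbf{A}=1+2\mathbf{e}_1-3\mathbf{e}_2+\mathbf{e}_3$, $\mathbf{B}=2-3\mathbf{e}_1+\mathbf{e}_2+2\mathbf{e}_3$, $\mathbf{C}=1-2\mathbf{e}_1+\mathbf{e}_2+\mathbf{e}_3$, $\mathbf{D}=-2+\mathbf{e}_1+\mathbf{e}_2-2\mathbf{e}_3$, and $\Omega=\lambda_3\mathbf{e}_1+\lambda_2\mathbf{e}_2+\lambda_1\mathbf{e}_3$. *)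

theory Defs
  imports Complex_Main
begin

text \<open>Elements psi0 + psi1 e1 + psi2 e2 + psi3 e3 of the 3-parameter generalized quaternions.\<close>
datatype gq = GQ real real real real

fun gq_add :: "gq \<Rightarrow> gq \<Rightarrow> gq" where
  "gq_add (GQ a0 a1 a2 a3) (GQ b0 b1 b2 b3) = GQ (a0+b0) (a1+b1) (a2+b2) (a3+b3)"

fun gq_scale :: "real \<Rightarrow> gq \<Rightarrow> gq" where
  "gq_scale c (GQ a0 a1 a2 a3) = GQ (c*a0) (c*a1) (c*a2) (c*a3)"

definition gq_sub :: "gq \<Rightarrow> gq \<Rightarrow> gq" where
  "gq_sub a b = gq_add a (gq_scale (-1) b)"

text \<open>Multiplication in H_{l1,l2,l3}, obtained by bilinear extension of the rules
  e1^2 = -l1 l2, e2^2 = -l1 l3, e3^2 = -l2 l3, e1 e2 = -e2 e1 = l1 e3,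
  e1 e3 = -e3 e1 = -l2 e2, e2 e3 = -e3 e2 = l3 e1.\<close>
fun gq_mult :: "real \<Rightarrow> real \<Rightarrow> real \<Rightarrow> gq \<Rightarrow> gq \<Rightarrow> gq" where
  "gq_mult l1 l2 l3 (GQ a0 a1 a2 a3) (GQ b0 b1 b2 b3) =
     GQ (a0*b0 - l1*l2*a1*b1 - l1*l3*a2*b2 - l2*l3*a3*b3)
        (a0*b1 + a1*b0 + l3*(a2*b3 - a3*b2))
        (a0*b2 + a2*b0 - l2*(a1*b3 - a3*b1))
        (a0*b3 + a3*b0 + l1*(a1*b2 - a2*b1))"

fun J3 :: "nat \<Rightarrow> int" where
  "J3 0 = 0" | "J3 (Suc 0) = 1" | "J3 (Suc (Suc 0)) = 1"
| "J3 (Suc (Suc (Suc n))) = J3 (Suc (Suc n)) + J3 (Suc n) + 2 * J3 n"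

fun K3 :: "nat \<Rightarrow> int" where
  "K3 0 = 3" | "K3 (Suc 0) = 1" | "K3 (Suc (Suc 0)) = 3"
| "K3 (Suc (Suc (Suc n))) = K3 (Suc (Suc n)) + K3 (Suc n) + 2 * K3 n"

definition JG :: "nat \<Rightarrow> gq" where
  "JG n = GQ (of_int (J3 n)) (of_int (J3 (n+1))) (of_int (J3 (n+2))) (of_int (J3 (n+3)))"

definition KG :: "nat \<Rightarrow> gq" where
  "KG n = GQ (of_int (K3 n)) (of_int (K3 (n+1))) (of_int (K3 (n+2))) (of_int (K3 (n+3)))"

definition Xs :: "nat \<Rightarrow> real" where
  "Xs n = (if n mod 3 = 0 then 0 else if n mod 3 = 1 then 1 else -1)"

definition Theta :: gq where "Theta = GQ 1 2 4 8"
definition gqA :: gq where "gqA = GQ 1 2 (-3) 1"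
definition gqB :: gq where "gqB = GQ 2 (-3) 1 2"
definition gqC :: gq where "gqC = GQ 1 (-2) 1 1"
definition gqD :: gq where "gqD = GQ (-2) 1 1 (-2)"
definition Omega :: "real \<Rightarrow> real \<Rightarrow> real \<Rightarrow> gq" where
  "Omega l1 l2 l3 = GQ 0 l3 l2 l1"

definition Y1 :: "nat \<Rightarrow> gq" where
  "Y1 m = gq_sub (gq_scale (Xs m) (gq_sub (gq_scale 2 gqA) gqB))
                 (gq_scale (Xs (m+1)) (gq_add (gq_scale 3 gqB) gqA))"

definition Y1s :: "nat \<Rightarrow> gq" where
  "Y1s m = gq_sub (gq_scale (Xs m) (gq_sub (gq_scale 2 gqC) gqD))
                  (gq_scale (Xs (m+1)) (gq_add (gq_scale 3 gqD) gqC))"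

definition Xi :: "real \<Rightarrow> real \<Rightarrow> real \<Rightarrow> gq" where
  "Xi l1 l2 l3 = gq_add (gq_add (gq_mult l1 l2 l3 gqA gqA) (gq_mult l1 l2 l3 gqA gqB))
                        (gq_mult l1 l2 l3 gqB gqB)"

definition Xis :: "real \<Rightarrow> real \<Rightarrow> real \<Rightarrow> gq" where
  "Xis l1 l2 l3 = gq_add (gq_add (gq_mult l1 l2 l3 gqC gqC) (gq_mult l1 l2 l3 gqC gqD))
                         (gq_mult l1 l2 l3 gqD gqD)"

end

theory Submission
  imports Defs
begin

definition vJ :: "nat \<Rightarrow> real" where
  "vJ n = (if n mod 3 = 0 then 2 else if n mod 3 = 1 then -3 else 1)"
definition uK :: "nat \<Rightarrow> real" where
  "uK n = (if n mod 3 = 0 then 2 else -1)"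

lemma J3_closed: "real_of_int (J3 n) = (2 * 2^n - vJ n) / 7"
  by (induction n rule: J3.induct) (auto simp: vJ_def mod_Suc)

lemma K3_closed: "real_of_int (K3 n) = 2^n + uK n"
  by (induction n rule: K3.induct) (auto simp: uK_def mod_Suc)

lemma mod3_cases: "(m::nat) mod 3 = 0 \<or> m mod 3 = 1 \<or> m mod 3 = 2" by auto

lemma caseJ0:
  fixes l1 l2 l3 :: real and m :: nat
  assumes h: "m mod 3 = 0"
  shows "gq_sub (gq_mult l1 l2 l3 (JG (m+2)) (JG m)) (gq_mult l1 l2 l3 (JG (m+1)) (JG (m+1))) =
           gq_scale (1/49)
             (gq_sub (gq_scale (2^(m+1)) (gq_sub (gq_scale 2 (gq_mult l1 l2 l3 Theta (Y1 m)))
                                             (gq_mult l1 l2 l3 (Y1 (m+1)) Theta)))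
                     (gq_add (Xi l1 l2 l3) (gq_scale 14 (Omega l1 l2 l3))))"
proof -
  have r: "(m+1) mod 3 = 1" "(m+2) mod 3 = 2" "(m+3) mod 3 = 0" "(m+4) mod 3 = 1" "(m+5) mod 3 = 2"
    using h by presburger+
  have v: "vJ m = 2" "vJ (m+1) = -3" "vJ (m+2) = 1" "vJ (m+3) = 2" "vJ (m+4) = -3" "vJ (m+5) = 1"
    "Xs m = 0" "Xs (m+1) = 1" "Xs (m+2) = -1"
    unfolding vJ_def Xs_def r using h by simp_all
  have e: "m+2+1 = m+3" "m+2+2 = m+4" "m+2+3=m+5" "m+1+1 = m+2" "m+1+2=m+3" "m+1+3=m+4" by auto
  have p: "\<And>k. (2::real)^(m+k) = 2^m * 2^k" by (simp add: power_add)
  show ?thesis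
  unfolding JG_def Y1_def Xi_def gqA_def gqB_def J3_closed Theta_def Omega_def gq_sub_def e v p
  by (simp add: field_simps)
qed

lemma caseK0:
  fixes l1 l2 l3 :: real and m :: nat
  assumes h: "m mod 3 = 0"
  shows "gq_sub (gq_mult l1 l2 l3 (KG (m+2)) (KG m)) (gq_mult l1 l2 l3 (KG (m+1)) (KG (m+1))) =
           gq_sub (gq_scale (2^m) (gq_sub (gq_scale 2 (gq_mult l1 l2 l3 Theta (Y1s m)))
                                              (gq_mult l1 l2 l3 (Y1s (m+1)) Theta)))
                  (gq_add (Xis l1 l2 l3) (gq_scale 6 (Omega l1 l2 l3)))"
proof -
  have r: "(m+1) mod 3 = 1" "(m+2) mod 3 = 2" "(m+3) mod 3 = 0" "(m+4) mod 3 = 1" "(m+5) mod 3 = 2"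
    using h by presburger+
  have v: "uK m = 2" "uK (m+1) = -1" "uK (m+2) = -1" "uK (m+3) = 2" "uK (m+4) = -1" "uK (m+5) = -1"
    "Xs m = 0" "Xs (m+1) = 1" "Xs (m+2) = -1"
    unfolding uK_def Xs_def r using h by simp_all
  have e: "m+2+1 = m+3" "m+2+2 = m+4" "m+2+3=m+5" "m+1+1 = m+2" "m+1+2=m+3" "m+1+3=m+4" by auto
  have p: "\<And>k. (2::real)^(m+k) = 2^m * 2^k" by (simp add: power_add)
  show ?thesis
  unfolding KG_def Y1s_def Xis_def gqC_def gqD_def K3_closed Theta_def Omega_def gq_sub_def e v p
  by (simp add: field_simps)
qed

lemma caseJ1:
  fixes l1 l2 l3 :: real and m :: nat
  assumes h: "m mod 3 = 1"
  shows "gq_sub (gq_mult l1 l2 l3 (JG (m+2)) (JG m)) (gq_mult l1 l2 l3 (JG (m+1)) (JG (m+1))) =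
           gq_scale (1/49)
             (gq_sub (gq_scale (2^(m+1)) (gq_sub (gq_scale 2 (gq_mult l1 l2 l3 Theta (Y1 m)))
                                             (gq_mult l1 l2 l3 (Y1 (m+1)) Theta)))
                     (gq_add (Xi l1 l2 l3) (gq_scale 14 (Omega l1 l2 l3))))"
proof -
  have r: "(m+1) mod 3 = 2" "(m+2) mod 3 = 0" "(m+3) mod 3 = 1" "(m+4) mod 3 = 2" "(m+5) mod 3 = 0"
    using h by presburger+
  have v: "vJ m = -3" "vJ (m+1) = 1" "vJ (m+2) = 2" "vJ (m+3) = -3" "vJ (m+4) = 1" "vJ (m+5) = 2"
    "Xs m = 1" "Xs (m+1) = -1" "Xs (m+2) = 0"
    unfolding vJ_def Xs_def r using h by simp_all
  have e: "m+2+1 = m+3" "m+2+2 = m+4" "m+2+3=m+5" "m+1+1 = m+2" "m+1+2=m+3" "m+1+3=m+4" by auto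
  have p: "\<And>k. (2::real)^(m+k) = 2^m * 2^k" by (simp add: power_add)
  show ?thesis
  unfolding JG_def Y1_def Xi_def gqA_def gqB_def J3_closed Theta_def Omega_def gq_sub_def e v p
  by (simp add: field_simps)
qed

lemma caseK1:
  fixes l1 l2 l3 :: real and m :: nat
  assumes h: "m mod 3 = 1"
  shows "gq_sub (gq_mult l1 l2 l3 (KG (m+2)) (KG m)) (gq_mult l1 l2 l3 (KG (m+1)) (KG (m+1))) =
           gq_sub (gq_scale (2^m) (gq_sub (gq_scale 2 (gq_mult l1 l2 l3 Theta (Y1s m)))
                                              (gq_mult l1 l2 l3 (Y1s (m+1)) Theta)))
                  (gq_add (Xis l1 l2 l3) (gq_scale 6 (Omega l1 l2 l3)))"
proof -
  have r: "(m+1) mod 3 = 2" "(m+2) mod 3 = 0" "(m+3) mod 3 = 1" "(m+4) mod 3 = 2" "(m+5) mod 3 = 0"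
    using h by presburger+
  have v: "uK m = -1" "uK (m+1) = -1" "uK (m+2) = 2" "uK (m+3) = -1" "uK (m+4) = -1" "uK (m+5) = 2"
    "Xs m = 1" "Xs (m+1) = -1" "Xs (m+2) = 0"
    unfolding uK_def Xs_def r using h by simp_all
  have e: "m+2+1 = m+3" "m+2+2 = m+4" "m+2+3=m+5" "m+1+1 = m+2" "m+1+2=m+3" "m+1+3=m+4" by auto
  have p: "\<And>k. (2::real)^(m+k) = 2^m * 2^k" by (simp add: power_add)
  show ?thesis
  unfolding KG_def Y1s_def Xis_def gqC_def gqD_def K3_closed Theta_def Omega_def gq_sub_def e v p
  by (simp add: field_simps)
qed

lemma caseJ2:
  fixes l1 l2 l3 :: real and m :: nat
  assumes h: "m mod 3 = 2"
  shows "gq_sub (gq_mult l1 l2 l3 (JG (m+2)) (JG m)) (gq_mult l1 l2 l3 (JG (m+1)) (JG (m+1))) =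
           gq_scale (1/49)
             (gq_sub (gq_scale (2^(m+1)) (gq_sub (gq_scale 2 (gq_mult l1 l2 l3 Theta (Y1 m)))
                                             (gq_mult l1 l2 l3 (Y1 (m+1)) Theta)))
                     (gq_add (Xi l1 l2 l3) (gq_scale 14 (Omega l1 l2 l3))))"
proof -
  have r: "(m+1) mod 3 = 0" "(m+2) mod 3 = 1" "(m+3) mod 3 = 2" "(m+4) mod 3 = 0" "(m+5) mod 3 = 1"
    using h by presburger+
  have v: "vJ m = 1" "vJ (m+1) = 2" "vJ (m+2) = -3" "vJ (m+3) = 1" "vJ (m+4) = 2" "vJ (m+5) = -3"
    "Xs m = -1" "Xs (m+1) = 0" "Xs (m+2) = 1"
    unfolding vJ_def Xs_def r using h by simp_all
  have e: "m+2+1 = m+3" "m+2+2 = m+4" "m+2+3=m+5" "m+1+1 = m+2" "m+1+2=m+3" "m+1+3=m+4" by auto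
  have p: "\<And>k. (2::real)^(m+k) = 2^m * 2^k" by (simp add: power_add)
  show ?thesis
  unfolding JG_def Y1_def Xi_def gqA_def gqB_def J3_closed Theta_def Omega_def gq_sub_def e v p
  by (simp add: field_simps)
qed

lemma caseK2:
  fixes l1 l2 l3 :: real and m :: nat
  assumes h: "m mod 3 = 2"
  shows "gq_sub (gq_mult l1 l2 l3 (KG (m+2)) (KG m)) (gq_mult l1 l2 l3 (KG (m+1)) (KG (m+1))) =
           gq_sub (gq_scale (2^m) (gq_sub (gq_scale 2 (gq_mult l1 l2 l3 Theta (Y1s m)))
                                              (gq_mult l1 l2 l3 (Y1s (m+1)) Theta)))
                  (gq_add (Xis l1 l2 l3) (gq_scale 6 (Omega l1 l2 l3)))"
proof -
  have r: "(m+1) mod 3 = 0" "(m+2) mod 3 = 1" "(m+3) mod 3 = 2" "(m+4) mod 3 = 0" "(m+5) mod 3 = 1"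
    using h by presburger+
  have v: "uK m = -1" "uK (m+1) = 2" "uK (m+2) = -1" "uK (m+3) = -1" "uK (m+4) = 2" "uK (m+5) = -1"
    "Xs m = -1" "Xs (m+1) = 0" "Xs (m+2) = 1"
    unfolding uK_def Xs_def r using h by simp_all
  have e: "m+2+1 = m+3" "m+2+2 = m+4" "m+2+3=m+5" "m+1+1 = m+2" "m+1+2=m+3" "m+1+3=m+4" by auto
  have p: "\<And>k. (2::real)^(m+k) = 2^m * 2^k" by (simp add: power_add)
  show ?thesis
  unfolding KG_def Y1s_def Xis_def gqC_def gqD_def K3_closed Theta_def Omega_def gq_sub_def e v p
  by (simp add: field_simps)
qed

theorem corollary3p3:
  fixes l1 l2 l3 :: real and n :: nat
  assumes "n \<ge> 1"
  shows "gq_sub (gq_mult l1 l2 l3 (JG (n+1)) (JG (n-1))) (gq_mult l1 l2 l3 (JG n) (JG n)) =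
           gq_scale (1/49)
             (gq_sub (gq_scale (2^n) (gq_sub (gq_scale 2 (gq_mult l1 l2 l3 Theta (Y1 (n-1))))
                                             (gq_mult l1 l2 l3 (Y1 n) Theta)))
                     (gq_add (Xi l1 l2 l3) (gq_scale 14 (Omega l1 l2 l3))))
       \<and> gq_sub (gq_mult l1 l2 l3 (KG (n+1)) (KG (n-1))) (gq_mult l1 l2 l3 (KG n) (KG n)) =
           gq_sub (gq_scale (2^(n-1)) (gq_sub (gq_scale 2 (gq_mult l1 l2 l3 Theta (Y1s (n-1))))
                                              (gq_mult l1 l2 l3 (Y1s n) Theta)))
                  (gq_add (Xis l1 l2 l3) (gq_scale 6 (Omega l1 l2 l3)))"
proof -
  obtain m where n: "n = m + 1" using assms by (cases n) auto
  have e: "m + 1 - 1 = m" "m + 1 + 1 = m + 2" by auto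
  show ?thesis unfolding n e using mod3_cases[of m]
    apply (elim disjE)
    subgoal using caseJ0[of m l1 l2 l3] caseK0[of m l1 l2 l3] by simp
    subgoal using caseJ1[of m l1 l2 l3] caseK1[of m l1 l2 l3] by simp
    subgoal using caseJ2[of m l1 l2 l3] caseK2[of m l1 l2 l3] by simp
    done
qed

end
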